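(* Let $(\tau,T)$ be a dynamic pricing process with $P(\tau<\infty)=1$ such that $T(\tau)$ solves the auxiliary stopping money problem \[\max_{X\in\mathcal{T}}\int_0^\infty P(X>y)\,dy\quad\text{s.t.}\quad \lambda\int_0^\infty w_-\big(P(X-s>y\mid X>s)\big)dy\le\theta\ \ \forall s \text{ with } P(X>s)>0.\] Then $(\tau,T)$ is an optimal dynamic pricing process.
   Context: Standing assumptions: $\theta>0$, $\lambda>0$; $w_+,w_-:[0,1]\to[0,1]$ strictly increasing, thrice differentiable, $w_\pm(0)=0$, $w_\pm(1)=1$, $w_\pm'(0)>1$, $w_\pm'(1)>1$, $w_\pm'''>0$. $\mathcal{T}$ is the set of nonnegative random variables whose CDF is the sum of a nondecreasing nonnegative absolutely continuous function and a nondecreasing nonnegative jump function. A cumulative payment function is $T:\mathbb{R}^+\to\mathbb{R}^+$ of the form $T(t)=\int_0^tf(s)ds+\sum_i1_{t_i<t}T_i$, with $f\ge0$ integrable and $(t_i),(T_i)$ countable sequences of nonnegative numbers, $t_i$ increasing. A stopping time is a random variable $\tau\in[0,\infty]$ whose CDF has the same kind of decomposition. A dynamic pricing process $(\tau,T)$ is DIR compatible if for every $s$ with $P(\tau>s)>0$, \[\theta\,w_+(P(\tau<\infty\mid\tau>s))-\lambda\int_0^\infty w_-\big(P(T(\tau)-T(s)>y\mid\tau>s)\big)dy\ge0;\] it is optimal if it is DIR compatible and maximizes $\int_0^\infty P(T(\tau)>y)dy$ among DIR compatible processes. *)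

theory Defs
  imports "HOL-Probability.Probability"
begin

definition weighting :: "(real \<Rightarrow> real) \<Rightarrow> bool" where
  "weighting w \<longleftrightarrow> strict_mono_on {0..1} w \<and> w 0 = 0 \<and> w 1 = 1 \<and>
     (\<forall>x\<in>{0..1}. 0 \<le> w x \<and> w x \<le> 1) \<and>
     (\<exists>w1 w2 w3. (\<forall>x\<in>{0..1}.
          (w has_real_derivative w1 x) (at x within {0..1}) \<and>
          (w1 has_real_derivative w2 x) (at x within {0..1}) \<and>
          (w2 has_real_derivative w3 x) (at x within {0..1}) \<and> w3 x > 0)
        \<and> w1 0 > 1 \<and> w1 1 > 1)"

definition abs_cont_fun :: "(real \<Rightarrow> real) \<Rightarrow> bool" where
  "abs_cont_fun G \<longleftrightarrow> (\<forall>\<epsilon>>0. \<exists>\<delta>>0. \<forall>(n::nat) (a::nat \<Rightarrow> real) b.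
      (\<forall>i<n. a i \<le> b i) \<and> (\<forall>i<n. \<forall>j<n. i \<noteq> j \<longrightarrow> b i \<le> a j \<or> b j \<le> a i) \<and>
      (\<Sum>i<n. b i - a i) < \<delta> \<longrightarrow> (\<Sum>i<n. \<bar>G (b i) - G (a i)\<bar>) < \<epsilon>)"

definition jump_fun :: "(real \<Rightarrow> real) \<Rightarrow> bool" where
  "jump_fun J \<longleftrightarrow> (\<exists>(x::nat \<Rightarrow> real) (\<alpha>::nat \<Rightarrow> real) (\<theta>::nat \<Rightarrow> real).
      (\<forall>n. 0 \<le> \<alpha> n) \<and> summable \<alpha> \<and> (\<forall>n. 0 \<le> \<theta> n \<and> \<theta> n \<le> 1) \<and>
      (\<forall>t. J t = (\<Sum>n. \<alpha> n * (if t < x n then 0 else if t = x n then \<theta> n else 1))))"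

definition cdf_decomp :: "(real \<Rightarrow> real) \<Rightarrow> bool" where
  "cdf_decomp F \<longleftrightarrow> (\<exists>G J. (\<forall>t. F t = G t + J t) \<and>
      mono G \<and> (\<forall>t. 0 \<le> G t) \<and> abs_cont_fun G \<and>
      mono J \<and> (\<forall>t. 0 \<le> J t) \<and> jump_fun J)"

definition in_calT :: "'a measure \<Rightarrow> ('a \<Rightarrow> real) \<Rightarrow> bool" where
  "in_calT M X \<longleftrightarrow> X \<in> borel_measurable M \<and> (\<forall>\<omega>\<in>space M. 0 \<le> X \<omega>) \<and>
     cdf_decomp (\<lambda>t. measure M {\<omega>\<in>space M. X \<omega> \<le> t})"

definition stopping_time_rv :: "'a measure \<Rightarrow> ('a \<Rightarrow> ereal) \<Rightarrow> bool" where
  "stopping_time_rv M \<tau> \<longleftrightarrow> \<tau> \<in> borel_measurable M \<and> (\<forall>\<omega>\<in>space M. 0 \<le> \<tau> \<omega>) \<and>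
     cdf_decomp (\<lambda>t. measure M {\<omega>\<in>space M. \<tau> \<omega> \<le> ereal t})"

text \<open>Cumulative payment functions (only the values on [0,\<infinity>) matter).\<close>
definition cum_pay :: "(real \<Rightarrow> real) \<Rightarrow> bool" where
  "cum_pay T \<longleftrightarrow> (\<exists>(f::real \<Rightarrow> real) (t::nat \<Rightarrow> real) (c::nat \<Rightarrow> real).
      (\<forall>s. 0 \<le> f s) \<and> set_integrable lborel {0..} f \<and>
      mono t \<and> (\<forall>i. 0 \<le> t i) \<and> (\<forall>i. 0 \<le> c i) \<and>
      (\<forall>x\<ge>0. summable (\<lambda>i. if t i < x then c i else 0) \<and>
         T x = (LBINT s:{0..x}. f s) + (\<Sum>i. if t i < x then c i else 0)))"

definition Tbar :: "(real \<Rightarrow> real) \<Rightarrow> ereal \<Rightarrow> ennreal" where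
  "Tbar T x = (if x = \<infinity> then (SUP t\<in>{0..}. ennreal (T t)) else ennreal (T (real_of_ereal x)))"

definition cond_prob :: "'a measure \<Rightarrow> 'a set \<Rightarrow> 'a set \<Rightarrow> real" where
  "cond_prob M A B = measure M (A \<inter> B) / measure M B"

definition dpp :: "'a measure \<Rightarrow> ('a \<Rightarrow> ereal) \<Rightarrow> (real \<Rightarrow> real) \<Rightarrow> bool" where
  "dpp M \<tau> T \<longleftrightarrow> stopping_time_rv M \<tau> \<and> cum_pay T"

definition dir_compat :: "'a measure \<Rightarrow> real \<Rightarrow> real \<Rightarrow> (real \<Rightarrow> real) \<Rightarrow> (real \<Rightarrow> real)
    \<Rightarrow> ('a \<Rightarrow> ereal) \<Rightarrow> (real \<Rightarrow> real) \<Rightarrow> bool" where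
  "dir_compat M \<theta> lam wp wm \<tau> T \<longleftrightarrow> (\<forall>s\<ge>0. measure M {\<omega>\<in>space M. \<tau> \<omega> > ereal s} > 0 \<longrightarrow>
      ennreal lam * (\<integral>\<^sup>+ y\<in>{0..}. ennreal (wm (cond_prob M
           {\<omega>\<in>space M. Tbar T (\<tau> \<omega>) - ennreal (T s) > ennreal y}
           {\<omega>\<in>space M. \<tau> \<omega> > ereal s})) \<partial>lborel)
      \<le> ennreal (\<theta> * wp (cond_prob M {\<omega>\<in>space M. \<tau> \<omega> < \<infinity>} {\<omega>\<in>space M. \<tau> \<omega> > ereal s})))"

definition revenue :: "'a measure \<Rightarrow> ('a \<Rightarrow> ereal) \<Rightarrow> (real \<Rightarrow> real) \<Rightarrow> ennreal" where
  "revenue M \<tau> T = (\<integral>\<^sup>+ y\<in>{0..}. ennreal (measure M {\<omega>\<in>space M. Tbar T (\<tau> \<omega>) > ennreal y}) \<partial>lborel)"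

definition optimal_dpp :: "'a measure \<Rightarrow> real \<Rightarrow> real \<Rightarrow> (real \<Rightarrow> real) \<Rightarrow> (real \<Rightarrow> real)
    \<Rightarrow> ('a \<Rightarrow> ereal) \<Rightarrow> (real \<Rightarrow> real) \<Rightarrow> bool" where
  "optimal_dpp M \<theta> lam wp wm \<tau> T \<longleftrightarrow> dpp M \<tau> T \<and> dir_compat M \<theta> lam wp wm \<tau> T \<and>
     (\<forall>\<tau>' T'. dpp M \<tau>' T' \<and> dir_compat M \<theta> lam wp wm \<tau>' T' \<longrightarrow> revenue M \<tau>' T' \<le> revenue M \<tau> T)"

definition aux_feasible :: "'a measure \<Rightarrow> real \<Rightarrow> real \<Rightarrow> (real \<Rightarrow> real) \<Rightarrow> ('a \<Rightarrow> real) \<Rightarrow> bool" where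
  "aux_feasible M \<theta> lam wm X \<longleftrightarrow> in_calT M X \<and>
     (\<forall>s\<ge>0. measure M {\<omega>\<in>space M. X \<omega> > s} > 0 \<longrightarrow>
        ennreal lam * (\<integral>\<^sup>+ y\<in>{0..}. ennreal (wm (cond_prob M
             {\<omega>\<in>space M. X \<omega> - s > y} {\<omega>\<in>space M. X \<omega> > s})) \<partial>lborel) \<le> ennreal \<theta>)"

definition aux_value :: "'a measure \<Rightarrow> ('a \<Rightarrow> real) \<Rightarrow> ennreal" where
  "aux_value M X = (\<integral>\<^sup>+ y\<in>{0..}. ennreal (measure M {\<omega>\<in>space M. X \<omega> > y}) \<partial>lborel)"

definition aux_solves :: "'a measure \<Rightarrow> real \<Rightarrow> real \<Rightarrow> (real \<Rightarrow> real) \<Rightarrow> ('a \<Rightarrow> real) \<Rightarrow> bool" where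
  "aux_solves M \<theta> lam wm X \<longleftrightarrow> aux_feasible M \<theta> lam wm X \<and>
     (\<forall>Y. aux_feasible M \<theta> lam wm Y \<longrightarrow> aux_value M Y \<le> aux_value M X)"

end

theory Submission
  imports Defs
begin

lemma cum_pay_int_mono:
  fixes f :: "real \<Rightarrow> real"
  assumes f0: "\<And>s. 0 \<le> f s" and fi: "set_integrable lborel {0..} f"
    and "0 \<le> x" "x \<le> y"
  shows "(LBINT s:{0..x}. f s) \<le> (LBINT s:{0..y}. f s)" "0 \<le> (LBINT s:{0..x}. f s)"
proof -
  have i1: "set_integrable lborel {0..x} f" by (rule set_integrable_subset[OF fi]) auto
  have i2: "set_integrable lborel {0..y} f" by (rule set_integrable_subset[OF fi]) auto
  have "(LBINT s:{0..y}. f s) = (LBINT s:{0..x}. f s) + (LBINT s:{x<..y}. f s)"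
  proof -
    have "{0..y} = {0..x} \<union> {x<..y}" using assms by auto
    then show ?thesis
      by (metis (no_types, lifting) set_integral_Un[of "{0..x}" "{x<..y}"] i2 set_integrable_subset
            sets_lborel atLeastAtMost_borel greaterThanAtMost_borel disjoint_iff greaterThanAtMost_iff
            atLeastAtMost_iff not_le sup_ge1 sup_ge2)
  qed
  moreover have "0 \<le> (LBINT s:{x<..y}. f s)"
    unfolding set_lebesgue_integral_def by (auto intro!: integral_nonneg simp: f0)
  ultimately show "(LBINT s:{0..x}. f s) \<le> (LBINT s:{0..y}. f s)" by simp
  show "0 \<le> (LBINT s:{0..x}. f s)"
    unfolding set_lebesgue_integral_def by (auto intro!: integral_nonneg simp: f0)
qed

lemma cum_pay_nonneg:
  assumes "cum_pay T" "0 \<le> x" shows "0 \<le> T x"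
proof -
  obtain f t c where f0: "\<forall>s. 0 \<le> (f::real\<Rightarrow>real) s" and fi: "set_integrable lborel {0..} f"
    and c0: "\<forall>i. 0 \<le> (c::nat\<Rightarrow>real) i"
    and T: "\<forall>x\<ge>0. summable (\<lambda>i. if (t::nat\<Rightarrow>real) i < x then c i else 0) \<and>
         T x = (LBINT s:{0..x}. f s) + (\<Sum>i. if t i < x then c i else 0)"
    using assms(1) unfolding cum_pay_def by blast
  have "0 \<le> (LBINT s:{0..x}. f s)" using cum_pay_int_mono(2)[of f x x] f0 fi assms by auto
  moreover have "0 \<le> (\<Sum>i. if t i < x then c i else 0)"
    using T assms(2) c0 by (intro suminf_nonneg) auto
  ultimately show ?thesis using T assms(2) by simp
qed

lemma cum_pay_mono:
  assumes "cum_pay T" "0 \<le> x" "x \<le> y" shows "T x \<le> T y"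
proof -
  obtain f t c where f0: "\<forall>s. 0 \<le> (f::real\<Rightarrow>real) s" and fi: "set_integrable lborel {0..} f"
    and c0: "\<forall>i. 0 \<le> (c::nat\<Rightarrow>real) i"
    and T: "\<forall>x\<ge>0. summable (\<lambda>i. if (t::nat\<Rightarrow>real) i < x then c i else 0) \<and>
         T x = (LBINT s:{0..x}. f s) + (\<Sum>i. if t i < x then c i else 0)"
    using assms(1) unfolding cum_pay_def by blast
  have "(LBINT s:{0..x}. f s) \<le> (LBINT s:{0..y}. f s)" using cum_pay_int_mono(1)[of f x y] f0 fi assms by auto
  moreover have "(\<Sum>i. if t i < x then c i else 0) \<le> (\<Sum>i. if t i < y then c i else 0)"
    using T assms c0 by (intro suminf_le) auto
  ultimately show ?thesis using T assms by simp
qed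

lemma cum_pay_zero:
  assumes "cum_pay T" shows "T 0 = 0"
proof -
  obtain f t c where f0: "\<forall>s. 0 \<le> (f::real\<Rightarrow>real) s" and fi: "set_integrable lborel {0..} f"
    and t0: "\<forall>i. 0 \<le> (t::nat\<Rightarrow>real) i"
    and T: "\<forall>x\<ge>0. summable (\<lambda>i. if t i < x then (c::nat\<Rightarrow>real) i else 0) \<and>
         T x = (LBINT s:{0..x}. f s) + (\<Sum>i. if t i < x then c i else 0)"
    using assms(1) unfolding cum_pay_def by blast
  have "(LBINT s:{0..0}. f s) = 0"
    unfolding set_lebesgue_integral_def
  proof -
    have "AE s in lborel. indicator {0..0::real} s *\<^sub>R f s = 0"
      using AE_lborel_singleton[of "0::real"] by eventually_elim auto
    then show "integral\<^sup>L lborel (\<lambda>s. indicat_real {0..0} s *\<^sub>R f s) = 0"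
      by (simp add: integral_eq_zero_AE)
  qed
  moreover have "(\<lambda>i. if t i < 0 then c i else 0) = (\<lambda>_. 0)" proof (rule ext)
    fix i show "(if t i < 0 then c i else 0) = 0" using t0 by (metis not_less)
  qed
  ultimately show ?thesis using T by simp
qed

lemma cum_pay_left:
  assumes "cum_pay T" "0 < x" "\<And>u. 0 \<le> u \<Longrightarrow> u < x \<Longrightarrow> T u \<le> s"
  shows "T x \<le> s"
proof -
  obtain f t c where f0: "\<forall>s. 0 \<le> (f::real\<Rightarrow>real) s" and fi: "set_integrable lborel {0..} f"
    and c0: "\<forall>i. 0 \<le> (c::nat\<Rightarrow>real) i"
    and T: "\<forall>x\<ge>0. summable (\<lambda>i. if (t::nat\<Rightarrow>real) i < x then c i else 0) \<and>
         T x = (LBINT s:{0..x}. f s) + (\<Sum>i. if t i < x then c i else 0)"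
    using assms(1) unfolding cum_pay_def by blast
  define I where "I x = (LBINT s:{0..x}. f s)" for x
  define a where "a u i = (if t i < u then c i else 0)" for u i
  have Tx: "T u = I u + suminf (a u)" if "0 \<le> u" for u using T that unfolding I_def a_def by auto
  have lim1: "(I \<longlongrightarrow> (LBINT s:{0..<x}. f s)) (at_left x)"
    unfolding I_def
    by (rule tendsto_set_lebesgue_integral_at_left) 
       (use assms(2) in \<open>auto intro: set_integrable_subset[OF fi]\<close>)
  have eqI: "(LBINT s:{0..<x}. f s) = I x"
    unfolding I_def
  proof (rule set_integral_cong_set)
    have "set_integrable lborel {0..x} f" by (rule set_integrable_subset[OF fi]) auto
    then show "set_borel_measurable lborel {0..x} f"
      unfolding set_integrable_def set_borel_measurable_def by (rule borel_measurable_integrable)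
    have "set_integrable lborel {0..<x} f" by (rule set_integrable_subset[OF fi]) auto
    then show "set_borel_measurable lborel {0..<x} f"
      unfolding set_integrable_def set_borel_measurable_def by (rule borel_measurable_integrable)
    show "AE xa in lborel. (xa \<in> {0..x}) = (xa \<in> {0..<x})"
      using AE_lborel_singleton[of x] by eventually_elim auto
  qed
  show ?thesis
  proof (rule field_le_epsilon)
    fix e :: real assume e: "0 < e"
    have "eventually (\<lambda>u. I x - e/2 < I u) (at_left x)"
      using order_tendstoD(1)[OF lim1[unfolded eqI], of "I x - e/2"] e by simp
    then obtain b where b: "b < x" "\<And>u. b < u \<Longrightarrow> u < x \<Longrightarrow> I x - e/2 < I u"
      unfolding eventually_at_left_field by blast
    have sx: "summable (a x)" using T assms(2) unfolding a_def by auto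
    have "eventually (\<lambda>n. suminf (a x) - e/2 < (\<Sum>i<n. a x i)) sequentially"
      using order_tendstoD(1)[OF summable_LIMSEQ[OF sx], of "suminf (a x) - e/2"] e by simp
    then obtain N where N: "suminf (a x) - e/2 < (\<Sum>i<N. a x i)"
      unfolding eventually_sequentially by blast
    define K where "K = insert (max 0 b) (t ` {i. i < N \<and> t i < x})"
    have finK: "finite K" unfolding K_def by auto
    have Klt: "\<forall>k\<in>K. k < x" unfolding K_def using b(1) assms(2) by auto
    define m where "m = Max K"
    have mK: "m \<in> K" unfolding m_def by (rule Max_in[OF finK]) (simp add: K_def)
    have mlt: "m < x" using Klt mK by auto
    have mge: "\<forall>k\<in>K. k \<le> m" unfolding m_def using finK by auto
    define u where "u = (m + x) / 2"
    have u1: "m < u" "u < x" using mlt unfolding u_def by auto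
    have u0: "0 \<le> u" using mge u1 unfolding K_def by auto
    have ub: "b < u" using mge u1 unfolding K_def by force
    have ti: "t i < u" if "i < N" "t i < x" for i using mge u1 that unfolding K_def by force
    have eqa: "(\<Sum>i<N. a x i) = (\<Sum>i<N. a u i)"
      unfolding a_def using ti u1 by (intro sum.cong) auto
    have su: "summable (a u)" using T u0 unfolding a_def by auto
    have "(\<Sum>i<N. a u i) \<le> suminf (a u)"
      using c0 by (intro sum_le_suminf[OF su]) (auto simp: a_def)
    have "T x = I x + suminf (a x)" using Tx assms(2) by simp
    also have "\<dots> < I u + e/2 + (\<Sum>i<N. a x i) + e/2" using b(2)[OF ub u1(2)] N by simp
    also have "\<dots> \<le> I u + suminf (a u) + e"
      using eqa \<open>(\<Sum>i<N. a u i) \<le> suminf (a u)\<close> by simp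
    also have "\<dots> = T u + e" using Tx u0 by simp
    also have "\<dots> \<le> s + e" using assms(3)[OF u0 u1(2)] by simp
    finally show "T x \<le> s + e" by simp
  qed
qed

lemma Tbar_fin[simp]: "Tbar T (ereal r) = ennreal (T r)"
  by (simp add: Tbar_def)

lemma Tbar_ge:
  assumes "cum_pay T" "0 \<le> t" "ereal t \<le> x"
  shows "ennreal (T t) \<le> Tbar T x"
proof (cases x)
  case (real r)
  then show ?thesis using assms cum_pay_mono[OF assms(1), of t r] by (simp add: ennreal_leI)
next
  case PInf
  then show ?thesis using assms by (auto simp: Tbar_def intro!: SUP_upper)
next
  case MInf
  then show ?thesis using assms by simp
qed

lemma Tbar_le:
  assumes "cum_pay T" "0 \<le> x" "x \<le> ereal t"
  shows "Tbar T x \<le> ennreal (T t)"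
proof (cases x)
  case (real r)
  then show ?thesis using assms cum_pay_mono[OF assms(1), of r t] by (simp add: ennreal_leI)
qed (use assms in auto)

lemma Tbar_le_const:
  assumes "cum_pay T" "0 \<le> x" "\<And>r. 0 \<le> r \<Longrightarrow> T r \<le> s"
  shows "Tbar T x \<le> ennreal s"
proof (cases x)
  case (real r)
  then show ?thesis using assms by (simp add: ennreal_leI)
next
  case PInf
  then show ?thesis using assms by (auto simp: Tbar_def intro!: SUP_least ennreal_leI)
qed (use assms in auto)

lemma Tbar_fin_lt_top: "x \<noteq> \<infinity> \<Longrightarrow> Tbar T x < top"
  by (simp add: Tbar_def)

lemma Tbar_measurable:
  assumes "cum_pay T" and [measurable]: "\<tau> \<in> borel_measurable M" and "\<forall>\<omega>\<in>space M. 0 \<le> \<tau> \<omega>"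
  shows "(\<lambda>\<omega>. Tbar T (\<tau> \<omega>)) \<in> borel_measurable M"
proof -
  define T0 where "T0 x = T (max 0 x)" for x
  have "mono T0" unfolding T0_def mono_def using cum_pay_mono[OF assms(1)] by auto
  then have [measurable]: "T0 \<in> borel_measurable borel" by (rule borel_measurable_mono)
  define C where "C = (SUP t\<in>{0..}. ennreal (T t))"
  have meas: "(\<lambda>\<omega>. if \<tau> \<omega> = \<infinity> then C else ennreal (T0 (real_of_ereal (\<tau> \<omega>)))) \<in> borel_measurable M"
    by measurable
  have eq: "\<And>\<omega>. \<omega> \<in> space M \<Longrightarrow> (if \<tau> \<omega> = \<infinity> then C else ennreal (T0 (real_of_ereal (\<tau> \<omega>)))) = Tbar T (\<tau> \<omega>)"
  proof -
    fix \<omega> assume "\<omega> \<in> space M"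
    then have "0 \<le> \<tau> \<omega>" using assms(3) by auto
    then show "(if \<tau> \<omega> = \<infinity> then C else ennreal (T0 (real_of_ereal (\<tau> \<omega>)))) = Tbar T (\<tau> \<omega>)"
      unfolding T0_def C_def Tbar_def by (cases "\<tau> \<omega>") auto
  qed
  show ?thesis
    by (rule measurable_cong[THEN iffD1, OF _ meas]) (rule eq)
qed

lemma prob_inter_full:
  assumes "prob_space M" "F \<in> sets M" "measure M F = 1" "S \<in> sets M"
  shows "measure M (S \<inter> F) = measure M S"
proof -
  interpret prob_space M by fact
  have "measure M (space M - F) = 0" using assms prob_compl by simp
  moreover have "measure M (S - F) \<le> measure M (space M - F)"
    using assms sets.sets_into_space by (intro finite_measure_mono) auto
  moreover have "measure M S = measure M (S \<inter> F) + measure M (S - F)"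
  proof -
    have "S = (S \<inter> F) \<union> (S - F)" by auto
    then have "measure M S = measure M ((S \<inter> F) \<union> (S - F))" by simp
    also have "\<dots> = measure M (S \<inter> F) + measure M (S - F)"
      using assms by (intro finite_measure_Union) auto
    finally show ?thesis .
  qed
  ultimately show ?thesis using measure_nonneg[of M "S - F"] by linarith
qed

lemma prob_le_ae_subset:
  assumes "prob_space M" "F \<in> sets M" "measure M F = 1" "B \<in> sets M" "A \<inter> F \<subseteq> B"
  shows "measure M A \<le> measure M B"
proof (cases "A \<in> sets M")
  case True
  interpret prob_space M by fact
  have "measure M A = measure M (A \<inter> F)" using prob_inter_full[OF assms(1-3) True] by simp
  also have "\<dots> \<le> measure M B" using assms True by (intro finite_measure_mono) auto
  finally show ?thesis .
next
  case False
  then show ?thesis by (simp add: measure_notin_sets)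
qed

lemma cond_prob_bounds:
  assumes "prob_space M" "B \<in> sets M"
  shows "0 \<le> cond_prob M A B" "cond_prob M A B \<le> 1"
proof -
  interpret prob_space M by fact
  show "0 \<le> cond_prob M A B" unfolding cond_prob_def by simp
  have "measure M (A \<inter> B) \<le> measure M B"
  proof (cases "A \<inter> B \<in> sets M")
    case True then show ?thesis using assms by (intro finite_measure_mono) auto
  qed (simp add: measure_notin_sets)
  then show "cond_prob M A B \<le> 1" unfolding cond_prob_def
    using measure_nonneg[of M B] by (cases "measure M B = 0") (auto simp: divide_le_eq_1 less_le)
qed

lemma weighting_facts:
  assumes "weighting w"
  shows "w 0 = 0" "w 1 = 1" "\<And>x. 0 \<le> x \<Longrightarrow> x \<le> 1 \<Longrightarrow> 0 \<le> w x"
    "\<And>x. 0 \<le> x \<Longrightarrow> x \<le> 1 \<Longrightarrow> w x \<le> 1"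
    "\<And>x y. 0 \<le> x \<Longrightarrow> x \<le> y \<Longrightarrow> y \<le> 1 \<Longrightarrow> w x \<le> w y"
    "\<And>x. 0 < x \<Longrightarrow> x \<le> 1 \<Longrightarrow> 0 < w x"
proof -
  have sm: "strict_mono_on {0..1} w" and w0: "w 0 = 0" and w1: "w 1 = 1"
    and b: "\<forall>x\<in>{0..1}. 0 \<le> w x \<and> w x \<le> 1"
    using assms unfolding weighting_def by auto
  show "w 0 = 0" "w 1 = 1" by fact+
  show "\<And>x. 0 \<le> x \<Longrightarrow> x \<le> 1 \<Longrightarrow> 0 \<le> w x" "\<And>x. 0 \<le> x \<Longrightarrow> x \<le> 1 \<Longrightarrow> w x \<le> 1"
    using b by auto
  show "w x \<le> w y" if h: "0 \<le> x" "x \<le> y" "y \<le> 1" for x y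
  proof (cases "x = y")
    case False
    then have "x < y" using h by simp
    then have "w x < w y" using strict_mono_onD[OF sm, of x y] h by auto
    then show ?thesis by simp
  qed simp
  show "0 < w x" if h: "0 < x" "x \<le> 1" for x
    using strict_mono_onD[OF sm, of 0 x] h w0 by auto
qed

lemma int_w_mono:
  fixes p q :: "real \<Rightarrow> real"
  assumes "weighting w" "\<And>y. 0 \<le> y \<Longrightarrow> 0 \<le> p y \<and> p y \<le> q y \<and> q y \<le> 1"
  shows "(\<integral>\<^sup>+ y\<in>{0..}. ennreal (w (p y)) \<partial>lborel) \<le> (\<integral>\<^sup>+ y\<in>{0..}. ennreal (w (q y)) \<partial>lborel)"
proof (rule nn_integral_mono)
  fix y :: real
  show "ennreal (w (p y)) * indicator {0..} y \<le> ennreal (w (q y)) * indicator {0..} y"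
  proof (cases "0 \<le> y")
    case True
    then have "w (p y) \<le> w (q y)" using assms(2)[OF True] weighting_facts(5)[OF assms(1)] by blast
    then show ?thesis using True by (simp add: ennreal_leI)
  qed simp
qed

lemma prob_eq_ae:
  assumes "prob_space M" "F \<in> sets M" "measure M F = 1" "A \<in> sets M" "B \<in> sets M" "A \<inter> F = B \<inter> F"
  shows "measure M A = measure M B"
  using prob_inter_full[OF assms(1-3) assms(4)] prob_inter_full[OF assms(1-3) assms(5)] assms(6) by simp

lemma partA:
  assumes P: "prob_space M" and th: "\<theta> > 0" and lam: "lam > 0"
    and wp: "weighting wp" and wm: "weighting wm" and d: "dpp M \<tau> T"
    and fin: "measure M {\<omega>\<in>space M. \<tau> \<omega> < \<infinity>} = 1"
    and feas: "aux_feasible M \<theta> lam wm (\<lambda>\<omega>. enn2real (Tbar T (\<tau> \<omega>)))"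
  shows "dir_compat M \<theta> lam wp wm \<tau> T"
proof -
  interpret prob_space M by fact
  have cp: "cum_pay T" and st: "stopping_time_rv M \<tau>" using d by (auto simp: dpp_def)
  have [measurable]: "\<tau> \<in> borel_measurable M" and t0: "\<forall>\<omega>\<in>space M. 0 \<le> \<tau> \<omega>"
    using st by (auto simp: stopping_time_rv_def)
  have [measurable]: "(\<lambda>\<omega>. Tbar T (\<tau> \<omega>)) \<in> borel_measurable M"
    by (rule Tbar_measurable[OF cp]) (use t0 in auto)
  define X where "X \<omega> = enn2real (Tbar T (\<tau> \<omega>))" for \<omega>
  have [measurable]: "X \<in> borel_measurable M" unfolding X_def by measurable
  define F where "F = {\<omega>\<in>space M. \<tau> \<omega> < \<infinity>}"
  have Fs: "F \<in> sets M" unfolding F_def by measurable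
  have F1: "measure M F = 1" using fin F_def by simp
  have XF: "0 \<le> real_of_ereal (\<tau> \<omega>) \<and> \<tau> \<omega> = ereal (real_of_ereal (\<tau> \<omega>)) \<and>
      X \<omega> = T (real_of_ereal (\<tau> \<omega>)) \<and> Tbar T (\<tau> \<omega>) = ennreal (X \<omega>)" if "\<omega> \<in> F" for \<omega>
  proof -
    have "0 \<le> \<tau> \<omega>" "\<tau> \<omega> < \<infinity>" using that t0 F_def by auto
    then obtain r where r: "\<tau> \<omega> = ereal r" "0 \<le> r" by (cases "\<tau> \<omega>") auto
    then show ?thesis using cum_pay_nonneg[OF cp r(2)] unfolding X_def by simp
  qed
  show ?thesis unfolding dir_compat_def
  proof (intro allI impI)
    fix s :: real assume s0: "0 \<le> s" and pos: "0 < measure M {\<omega>\<in>space M. \<tau> \<omega> > ereal s}"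
    define C where "C = {\<omega>\<in>space M. \<tau> \<omega> > ereal s}"
    have Cs: "C \<in> sets M" unfolding C_def by measurable
    have rhs: "cond_prob M {\<omega>\<in>space M. \<tau> \<omega> < \<infinity>} C = 1"
      using prob_inter_full[OF P Fs F1 Cs] pos unfolding cond_prob_def C_def F_def
      by (simp add: Int_commute)
    have Ts0: "0 \<le> T s" using cum_pay_nonneg[OF cp s0] .
    define D where "D = {\<omega>\<in>space M. X \<omega> > T s}"
    have Ds: "D \<in> sets M" unfolding D_def by measurable
    have DC: "measure M D \<le> measure M C"
    proof (rule prob_le_ae_subset[OF P Fs F1 Cs])
      show "D \<inter> F \<subseteq> C"
      proof
        fix \<omega> assume w: "\<omega> \<in> D \<inter> F"
        then have xf: "0 \<le> real_of_ereal (\<tau> \<omega>) \<and> \<tau> \<omega> = ereal (real_of_ereal (\<tau> \<omega>)) \<and>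
           X \<omega> = T (real_of_ereal (\<tau> \<omega>))" using XF by blast
        have "\<not> real_of_ereal (\<tau> \<omega>) \<le> s"
          using cum_pay_mono[OF cp, of "real_of_ereal (\<tau> \<omega>)" s] xf w unfolding D_def by auto
        moreover have "\<tau> \<omega> = ereal (real_of_ereal (\<tau> \<omega>))" using xf by blast
        ultimately have "ereal s < \<tau> \<omega>" by (metis less_ereal.simps(1) not_le)
        then show "\<omega> \<in> C" using w unfolding C_def D_def by auto
      qed
    qed
    define A where "A y = {\<omega>\<in>space M. Tbar T (\<tau> \<omega>) - ennreal (T s) > ennreal y}" for y
    define B where "B y = {\<omega>\<in>space M. X \<omega> - T s > y}" for y
    have Bs: "B y \<in> sets M" for y unfolding B_def by measurable
    have AB: "measure M (A y \<inter> C) \<le> measure M (B y \<inter> D)" if y0: "0 \<le> y" for y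
    proof (rule prob_le_ae_subset[OF P Fs F1])
      show "B y \<inter> D \<in> sets M" using Bs Ds by auto
      show "A y \<inter> C \<inter> F \<subseteq> B y \<inter> D"
      proof
        fix \<omega> assume w: "\<omega> \<in> A y \<inter> C \<inter> F"
        then have xf: "Tbar T (\<tau> \<omega>) = ennreal (X \<omega>)" using XF by blast
        have "ennreal y < ennreal (X \<omega> - T s)"
          using w xf ennreal_minus[OF Ts0, of "X \<omega>"] unfolding A_def by auto
        then have "y < X \<omega> - T s" using y0 ennreal_less_iff by blast
        then show "\<omega> \<in> B y \<inter> D" using w y0 unfolding B_def D_def C_def by auto
      qed
    qed
    have BD: "measure M (B y \<inter> D) \<le> measure M D" for y
      using Bs Ds by (intro finite_measure_mono) auto
    have main: "ennreal lam * (\<integral>\<^sup>+ y\<in>{0..}. ennreal (wm (cond_prob M (A y) C)) \<partial>lborel) \<le> ennreal \<theta>"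
    proof (cases "measure M D = 0")
      case True
      have "cond_prob M (A y) C = 0" if "0 \<le> y" for y
      proof -
        have "measure M (A y \<inter> C) = 0"
          using AB[OF that] BD[of y] True measure_nonneg[of M "A y \<inter> C"] by linarith
        then show ?thesis unfolding cond_prob_def by simp
      qed
      then have "(\<integral>\<^sup>+ y\<in>{0..}. ennreal (wm (cond_prob M (A y) C)) \<partial>lborel) = (\<integral>\<^sup>+ (y::real). 0 \<partial>lborel)"
        by (intro nn_integral_cong) (auto split: split_indicator simp: weighting_facts(1)[OF wm])
      then show ?thesis by simp
    next
      case False
      then have Dpos: "0 < measure M D" using measure_nonneg[of M D] by linarith
      have fe: "ennreal lam * (\<integral>\<^sup>+ y\<in>{0..}. ennreal (wm (cond_prob M (B y) D)) \<partial>lborel) \<le> ennreal \<theta>"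
        using feas Ts0 Dpos unfolding aux_feasible_def B_def D_def X_def by blast
      have "(\<integral>\<^sup>+ y\<in>{0..}. ennreal (wm (cond_prob M (A y) C)) \<partial>lborel)
          \<le> (\<integral>\<^sup>+ y\<in>{0..}. ennreal (wm (cond_prob M (B y) D)) \<partial>lborel)"
      proof (rule int_w_mono[OF wm])
        fix y :: real assume y0: "0 \<le> y"
        have "cond_prob M (A y) C \<le> cond_prob M (B y) D"
        proof -
          have "cond_prob M (A y) C = measure M (A y \<inter> C) / measure M C" by (simp add: cond_prob_def)
          also have "\<dots> \<le> measure M (B y \<inter> D) / measure M C"
            using AB[OF y0] pos C_def by (simp add: divide_right_mono)
          also have "\<dots> \<le> measure M (B y \<inter> D) / measure M D"
            using DC Dpos by (intro divide_left_mono) auto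
          also have "\<dots> = cond_prob M (B y) D" by (simp add: cond_prob_def)
          finally show ?thesis .
        qed
        then show "0 \<le> cond_prob M (A y) C \<and> cond_prob M (A y) C \<le> cond_prob M (B y) D \<and> cond_prob M (B y) D \<le> 1"
          using cond_prob_bounds[OF P Cs] cond_prob_bounds[OF P Ds] by auto
      qed
      then have "ennreal lam * (\<integral>\<^sup>+ y\<in>{0..}. ennreal (wm (cond_prob M (A y) C)) \<partial>lborel)
          \<le> ennreal lam * (\<integral>\<^sup>+ y\<in>{0..}. ennreal (wm (cond_prob M (B y) D)) \<partial>lborel)"
        by (rule mult_left_mono) simp
      then show ?thesis using fe by simp
    qed
    show "ennreal lam * (\<integral>\<^sup>+ y\<in>{0..}. ennreal (wm (cond_prob M
           {\<omega>\<in>space M. Tbar T (\<tau> \<omega>) - ennreal (T s) > ennreal y}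
           {\<omega>\<in>space M. \<tau> \<omega> > ereal s})) \<partial>lborel)
      \<le> ennreal (\<theta> * wp (cond_prob M {\<omega>\<in>space M. \<tau> \<omega> < \<infinity>} {\<omega>\<in>space M. \<tau> \<omega> > ereal s}))"
      using main rhs weighting_facts(2)[OF wp] unfolding A_def C_def by simp
  qed
qed

lemma partB:
  assumes P: "prob_space M" and d: "dpp M \<tau> T"
    and fin: "measure M {\<omega>\<in>space M. \<tau> \<omega> < \<infinity>} = 1"
  shows "revenue M \<tau> T = aux_value M (\<lambda>\<omega>. enn2real (Tbar T (\<tau> \<omega>)))"
proof -
  interpret prob_space M by fact
  have cp: "cum_pay T" and st: "stopping_time_rv M \<tau>" using d by (auto simp: dpp_def)
  have [measurable]: "\<tau> \<in> borel_measurable M" and t0: "\<forall>\<omega>\<in>space M. 0 \<le> \<tau> \<omega>"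
    using st by (auto simp: stopping_time_rv_def)
  have [measurable]: "(\<lambda>\<omega>. Tbar T (\<tau> \<omega>)) \<in> borel_measurable M"
    by (rule Tbar_measurable[OF cp]) (use t0 in auto)
  define F where "F = {\<omega>\<in>space M. \<tau> \<omega> < \<infinity>}"
  have Fs: "F \<in> sets M" unfolding F_def by measurable
  have F1: "measure M F = 1" using fin F_def by simp
  have XF: "Tbar T (\<tau> \<omega>) = ennreal (enn2real (Tbar T (\<tau> \<omega>)))" if "\<omega> \<in> F" for \<omega>
  proof -
    have "\<tau> \<omega> \<noteq> \<infinity>" using that F_def by auto
    then show ?thesis using Tbar_fin_lt_top by simp
  qed
  show ?thesis unfolding revenue_def aux_value_def
  proof (rule nn_integral_cong)
    fix y :: real
    show "ennreal (measure M {\<omega>\<in>space M. Tbar T (\<tau> \<omega>) > ennreal y}) * indicator {0..} y =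
      ennreal (measure M {\<omega>\<in>space M. enn2real (Tbar T (\<tau> \<omega>)) > y}) * indicator {0..} y"
    proof (cases "0 \<le> y")
      case True
      have "measure M {\<omega>\<in>space M. Tbar T (\<tau> \<omega>) > ennreal y} = measure M {\<omega>\<in>space M. enn2real (Tbar T (\<tau> \<omega>)) > y}"
      proof (rule prob_eq_ae[OF P Fs F1])
        show "{\<omega>\<in>space M. Tbar T (\<tau> \<omega>) > ennreal y} \<in> sets M" by measurable
        show "{\<omega>\<in>space M. enn2real (Tbar T (\<tau> \<omega>)) > y} \<in> sets M" by measurable
        show "{\<omega>\<in>space M. Tbar T (\<tau> \<omega>) > ennreal y} \<inter> F = {\<omega>\<in>space M. enn2real (Tbar T (\<tau> \<omega>)) > y} \<inter> F"
        proof (intro set_eqI iffI)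
          fix \<omega> assume "\<omega> \<in> {\<omega>\<in>space M. Tbar T (\<tau> \<omega>) > ennreal y} \<inter> F"
          then show "\<omega> \<in> {\<omega>\<in>space M. enn2real (Tbar T (\<tau> \<omega>)) > y} \<inter> F"
            using XF[of \<omega>] True by (metis (mono_tags, lifting) IntE IntI ennreal_less_iff enn2real_nonneg mem_Collect_eq)
        next
          fix \<omega> assume "\<omega> \<in> {\<omega>\<in>space M. enn2real (Tbar T (\<tau> \<omega>)) > y} \<inter> F"
          then show "\<omega> \<in> {\<omega>\<in>space M. Tbar T (\<tau> \<omega>) > ennreal y} \<inter> F"
            using XF[of \<omega>] True by (metis (mono_tags, lifting) IntE IntI ennreal_less_iff mem_Collect_eq)
        qed
      qed
      then show ?thesis by simp
    qed simp
  qed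
qed

lemma lborel_Ici_top: "emeasure lborel {0::real..} = top"
proof (rule ccontr)
  assume "emeasure lborel {0::real..} \<noteq> top"
  then have "emeasure lborel {0::real..} < top" by (simp add: top.not_eq_extremum)
  then obtain n :: nat where n: "emeasure lborel {0::real..} < of_nat n"
    using ennreal_Ex_less_of_nat by blast
  have "emeasure lborel {0::real..real n} \<le> emeasure lborel {0::real..}"
    by (intro emeasure_mono) auto
  moreover have "emeasure lborel {0::real..real n} = of_nat n"
    by (simp add: emeasure_lborel_Icc ennreal_of_nat_eq_real_of_nat)
  ultimately show False using n by simp
qed

lemma int_const_top:
  assumes "0 < k"
  shows "(\<integral>\<^sup>+ y\<in>{0::real..}. ennreal k \<partial>lborel) = top"
  using assms by (simp add: nn_integral_cmult_indicator lborel_Ici_top ennreal_mult_top)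

lemma tstar:
  assumes cp: "cum_pay T" and s0: "0 \<le> s" and ex: "\<exists>r\<ge>0. T r > s"
  shows "\<exists>t\<ge>0. T t \<le> s \<and> (\<forall>r>t. T r > s)"
proof -
  obtain r0 where r0: "0 \<le> r0" "T r0 > s" using ex by blast
  define S where "S = {t. 0 \<le> t \<and> T t \<le> s}"
  have T00: "T 0 = 0" by (rule cum_pay_zero[OF cp])
  have S0: "0 \<in> S" using T00 s0 unfolding S_def by simp
  have Sb: "t < r0" if "t \<in> S" for t
  proof (rule ccontr)
    assume "\<not> t < r0"
    then have "T r0 \<le> T t" using cum_pay_mono[OF cp r0(1)] by simp
    then show False using that r0 unfolding S_def by simp
  qed
  have bdd: "bdd_above S" using Sb by (meson bdd_aboveI less_imp_le)
  define t where "t = Sup S"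
  have t0: "0 \<le> t" unfolding t_def using S0 bdd by (rule cSup_upper)
  have gt: "T r > s" if "r > t" for r
  proof (rule ccontr)
    assume "\<not> T r > s"
    then have "r \<in> S" using that t0 unfolding S_def by simp
    then have "r \<le> t" unfolding t_def using bdd by (rule cSup_upper)
    then show False using that by simp
  qed
  have le: "T t \<le> s"
  proof (cases "t = 0")
    case True then show ?thesis using T00 s0 by simp
  next
    case False
    then have tp: "0 < t" using t0 by simp
    show ?thesis
    proof (rule cum_pay_left[OF cp tp])
      fix u assume u: "0 \<le> u" "u < t"
      then obtain v where v: "v \<in> S" "u < v" using less_cSup_iff[of S u] S0 bdd unfolding t_def by auto
      then show "T u \<le> s" using cum_pay_mono[OF cp u(1), of v] unfolding S_def by simp
    qed
  qed
  show ?thesis using t0 le gt by blast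
qed

lemma C1:
  assumes P: "prob_space M" and lam: "lam > 0" and wm: "weighting wm" and d: "dpp M \<tau> T"
    and dc: "dir_compat M \<theta> lam wp wm \<tau> T"
  shows "measure M {\<omega>\<in>space M. Tbar T (\<tau> \<omega>) = top} = 0"
proof (rule ccontr)
  interpret prob_space M by fact
  have cp: "cum_pay T" and st: "stopping_time_rv M \<tau>" using d by (auto simp: dpp_def)
  have [measurable]: "\<tau> \<in> borel_measurable M" and t0: "\<forall>\<omega>\<in>space M. 0 \<le> \<tau> \<omega>"
    using st by (auto simp: stopping_time_rv_def)
  have [measurable]: "(\<lambda>\<omega>. Tbar T (\<tau> \<omega>)) \<in> borel_measurable M"
    by (rule Tbar_measurable[OF cp]) (use t0 in auto)
  define N where "N = {\<omega>\<in>space M. Tbar T (\<tau> \<omega>) = top}"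
  have Ns: "N \<in> sets M" unfolding N_def by measurable
  assume "measure M {\<omega>\<in>space M. Tbar T (\<tau> \<omega>) = top} \<noteq> 0"
  then have Npos: "0 < measure M N" unfolding N_def using measure_nonneg less_le by metis
  define C where "C = {\<omega>\<in>space M. \<tau> \<omega> > ereal 0}"
  have Cs: "C \<in> sets M" unfolding C_def by measurable
  have NC: "N \<subseteq> C"
  proof
    fix \<omega> assume w: "\<omega> \<in> N"
    show "\<omega> \<in> C"
    proof (rule ccontr)
      assume "\<omega> \<notin> C"
      then have "\<tau> \<omega> \<le> ereal 0" "0 \<le> \<tau> \<omega>" using w t0 unfolding C_def N_def by auto
      then have "Tbar T (\<tau> \<omega>) \<le> ennreal (T 0)" by (intro Tbar_le[OF cp])
      then show False using w unfolding N_def by (simp add: top_unique)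
    qed
  qed
  have NCm: "measure M N \<le> measure M C" using NC Ns Cs by (intro finite_measure_mono) auto
  then have Cpos: "0 < measure M C" using Npos by simp
  define A where "A y = {\<omega>\<in>space M. Tbar T (\<tau> \<omega>) - ennreal (T 0) > ennreal y}" for y
  have As: "A y \<inter> C \<in> sets M" for y unfolding A_def C_def by measurable
  define c where "c = measure M N / measure M C"
  have c0: "0 < c" "c \<le> 1" unfolding c_def using Npos Cpos NCm by auto
  have cle: "c \<le> cond_prob M (A y) C" for y
  proof -
    have "N \<subseteq> A y \<inter> C" using NC unfolding N_def A_def by auto
    then have "measure M N \<le> measure M (A y \<inter> C)" using As Ns by (intro finite_measure_mono) auto
    then show ?thesis unfolding c_def cond_prob_def using Cpos by (simp add: divide_right_mono)
  qed
  then have "(\<integral>\<^sup>+ y\<in>{0::real..}. ennreal (wm c) \<partial>lborel) \<le> (\<integral>\<^sup>+ y\<in>{0..}. ennreal (wm (cond_prob M (A y) C)) \<partial>lborel)"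
    using int_w_mono[OF wm, of "\<lambda>_. c" "\<lambda>y. cond_prob M (A y) C"] c0 cond_prob_bounds[OF P Cs] cle
    by auto
  moreover have "(\<integral>\<^sup>+ y\<in>{0::real..}. ennreal (wm c) \<partial>lborel) = top"
    using weighting_facts(6)[OF wm c0] by (rule int_const_top)
  ultimately have "(\<integral>\<^sup>+ y\<in>{0..}. ennreal (wm (cond_prob M (A y) C)) \<partial>lborel) = top"
    by (simp add: top_unique)
  then have "ennreal lam * (\<integral>\<^sup>+ y\<in>{0..}. ennreal (wm (cond_prob M (A y) C)) \<partial>lborel) = top"
    using lam by (simp add: ennreal_mult_top)
  moreover have "ennreal lam * (\<integral>\<^sup>+ y\<in>{0..}. ennreal (wm (cond_prob M (A y) C)) \<partial>lborel)
      \<le> ennreal (\<theta> * wp (cond_prob M {\<omega>\<in>space M. \<tau> \<omega> < \<infinity>} C))"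
    unfolding A_def C_def
    by (rule dc[unfolded dir_compat_def, rule_format, of 0]) (use Cpos C_def in simp_all)
  ultimately show False by (simp add: top_unique)
qed

lemma C2:
  assumes P: "prob_space M" and d: "dpp M \<tau> T"
    and N0: "measure M {\<omega>\<in>space M. Tbar T (\<tau> \<omega>) = top} = 0"
  shows "revenue M \<tau> T = aux_value M (\<lambda>\<omega>. enn2real (Tbar T (\<tau> \<omega>)))"
proof -
  interpret prob_space M by fact
  have cp: "cum_pay T" and st: "stopping_time_rv M \<tau>" using d by (auto simp: dpp_def)
  have [measurable]: "\<tau> \<in> borel_measurable M" and t0: "\<forall>\<omega>\<in>space M. 0 \<le> \<tau> \<omega>"
    using st by (auto simp: stopping_time_rv_def)
  have [measurable]: "(\<lambda>\<omega>. Tbar T (\<tau> \<omega>)) \<in> borel_measurable M"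
    by (rule Tbar_measurable[OF cp]) (use t0 in auto)
  define F where "F = space M - {\<omega>\<in>space M. Tbar T (\<tau> \<omega>) = top}"
  have Fs: "F \<in> sets M" unfolding F_def by measurable
  have Ns: "{\<omega>\<in>space M. Tbar T (\<tau> \<omega>) = top} \<in> sets M" by measurable
  have F1: "measure M F = 1" unfolding F_def using prob_compl[OF Ns] N0 by simp
  have XF: "Tbar T (\<tau> \<omega>) = ennreal (enn2real (Tbar T (\<tau> \<omega>)))" if "\<omega> \<in> F" for \<omega>
    using that unfolding F_def by (simp add: top.not_eq_extremum)
  show ?thesis unfolding revenue_def aux_value_def
  proof (rule nn_integral_cong)
    fix y :: real
    show "ennreal (measure M {\<omega>\<in>space M. Tbar T (\<tau> \<omega>) > ennreal y}) * indicator {0..} y =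
      ennreal (measure M {\<omega>\<in>space M. enn2real (Tbar T (\<tau> \<omega>)) > y}) * indicator {0..} y"
    proof (cases "0 \<le> y")
      case True
      have "measure M {\<omega>\<in>space M. Tbar T (\<tau> \<omega>) > ennreal y} = measure M {\<omega>\<in>space M. enn2real (Tbar T (\<tau> \<omega>)) > y}"
      proof (rule prob_eq_ae[OF P Fs F1])
        show "{\<omega>\<in>space M. Tbar T (\<tau> \<omega>) > ennreal y} \<in> sets M" by measurable
        show "{\<omega>\<in>space M. enn2real (Tbar T (\<tau> \<omega>)) > y} \<in> sets M" by measurable
        show "{\<omega>\<in>space M. Tbar T (\<tau> \<omega>) > ennreal y} \<inter> F = {\<omega>\<in>space M. enn2real (Tbar T (\<tau> \<omega>)) > y} \<inter> F"
        proof (intro set_eqI iffI)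
          fix \<omega> assume "\<omega> \<in> {\<omega>\<in>space M. Tbar T (\<tau> \<omega>) > ennreal y} \<inter> F"
          then show "\<omega> \<in> {\<omega>\<in>space M. enn2real (Tbar T (\<tau> \<omega>)) > y} \<inter> F"
            using XF[of \<omega>] True by (metis (mono_tags, lifting) IntE IntI ennreal_less_iff enn2real_nonneg mem_Collect_eq)
        next
          fix \<omega> assume "\<omega> \<in> {\<omega>\<in>space M. enn2real (Tbar T (\<tau> \<omega>)) > y} \<inter> F"
          then show "\<omega> \<in> {\<omega>\<in>space M. Tbar T (\<tau> \<omega>) > ennreal y} \<inter> F"
            using XF[of \<omega>] True by (metis (mono_tags, lifting) IntE IntI ennreal_less_iff mem_Collect_eq)
        qed
      qed
      then show ?thesis by simp
    qed simp
  qed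
qed

lemma C3:
  assumes P: "prob_space M" and th: "\<theta> > 0" and lam: "lam > 0"
    and wp: "weighting wp" and wm: "weighting wm" and d: "dpp M \<tau> T"
    and dc: "dir_compat M \<theta> lam wp wm \<tau> T"
    and N0: "measure M {\<omega>\<in>space M. Tbar T (\<tau> \<omega>) = top} = 0"
    and s0: "0 \<le> s" and pos: "0 < measure M {\<omega>\<in>space M. enn2real (Tbar T (\<tau> \<omega>)) > s}"
  shows "ennreal lam * (\<integral>\<^sup>+ y\<in>{0..}. ennreal (wm (measure M {\<omega>\<in>space M. enn2real (Tbar T (\<tau> \<omega>)) > s + y}
            / measure M {\<omega>\<in>space M. enn2real (Tbar T (\<tau> \<omega>)) > s})) \<partial>lborel) \<le> ennreal \<theta>"
proof -
  interpret prob_space M by fact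
  have cp: "cum_pay T" and st: "stopping_time_rv M \<tau>" using d by (auto simp: dpp_def)
  have [measurable]: "\<tau> \<in> borel_measurable M" and t0: "\<forall>\<omega>\<in>space M. 0 \<le> \<tau> \<omega>"
    using st by (auto simp: stopping_time_rv_def)
  have [measurable]: "(\<lambda>\<omega>. Tbar T (\<tau> \<omega>)) \<in> borel_measurable M"
    by (rule Tbar_measurable[OF cp]) (use t0 in auto)
  define Y where "Y \<omega> = enn2real (Tbar T (\<tau> \<omega>))" for \<omega>
  have [measurable]: "Y \<in> borel_measurable M" unfolding Y_def by measurable
  have posY: "0 < measure M {\<omega>\<in>space M. Y \<omega> > s}" using pos unfolding Y_def .
  have ex: "\<exists>r\<ge>0. T r > s"
  proof (rule ccontr)
    assume "\<not> (\<exists>r\<ge>0. T r > s)"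
    then have le: "\<And>r. 0 \<le> r \<Longrightarrow> T r \<le> s" by auto
    have "Y \<omega> \<le> s" if "\<omega> \<in> space M" for \<omega>
      unfolding Y_def using Tbar_le_const[OF cp _ le] t0 that s0 by (intro enn2real_leI) auto
    then have "{\<omega>\<in>space M. Y \<omega> > s} = {}" by force
    then have "measure M {\<omega>\<in>space M. Y \<omega> > s} = 0" by (metis measure_empty)
    then show False using posY by linarith
  qed
  obtain t where t: "0 \<le> t" "T t \<le> s" "\<And>r. r > t \<Longrightarrow> T r > s" using tstar[OF cp s0 ex] by blast
  have Tt0: "0 \<le> T t" using cum_pay_nonneg[OF cp t(1)] .
  define C where "C = {\<omega>\<in>space M. \<tau> \<omega> > ereal t}"
  have Cs: "C \<in> sets M" unfolding C_def by measurable
  have Ysub: "\<omega> \<in> C" if "\<omega> \<in> space M" "Y \<omega> > s" for \<omega>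
  proof (rule ccontr)
    assume "\<omega> \<notin> C"
    then have "\<tau> \<omega> \<le> ereal t" using that unfolding C_def by auto
    then have "Tbar T (\<tau> \<omega>) \<le> ennreal (T t)" using Tbar_le[OF cp] t0 that by auto
    also have "\<dots> \<le> ennreal s" using t(2) by (simp add: ennreal_leI)
    finally have "Y \<omega> \<le> s" unfolding Y_def using s0 by (intro enn2real_leI) auto
    then show False using that by simp
  qed
  define F where "F = space M - {\<omega>\<in>space M. Tbar T (\<tau> \<omega>) = top}"
  have Fs: "F \<in> sets M" unfolding F_def by measurable
  have Ns: "{\<omega>\<in>space M. Tbar T (\<tau> \<omega>) = top} \<in> sets M" by measurable
  have F1: "measure M F = 1" unfolding F_def using prob_compl[OF Ns] N0 by simp
  have CF: "C \<inter> F \<subseteq> {\<omega>\<in>space M. Y \<omega> > s}"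
  proof
    fix \<omega> assume w: "\<omega> \<in> C \<inter> F"
    then have tw: "ereal t < \<tau> \<omega>" and sp: "\<omega> \<in> space M" and ntop: "Tbar T (\<tau> \<omega>) < top"
      unfolding C_def F_def by (auto simp: top.not_eq_extremum)
    obtain r where r: "t < r" "ereal r \<le> \<tau> \<omega>"
    proof (cases "\<tau> \<omega>")
      case (real r') then show ?thesis using that tw by auto
    next
      case PInf then show ?thesis using that[of "t + 1"] by auto
    next
      case MInf then show ?thesis using tw by auto
    qed
    have r0: "0 \<le> r" using r t by simp
    have "ennreal (T r) \<le> Tbar T (\<tau> \<omega>)" using Tbar_ge[OF cp r0 r(2)] .
    then have "enn2real (ennreal (T r)) \<le> Y \<omega>" unfolding Y_def using ntop by (intro enn2real_mono) auto
    then have "T r \<le> Y \<omega>" using cum_pay_nonneg[OF cp r0] by simp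
    then show "\<omega> \<in> {\<omega>\<in>space M. Y \<omega> > s}" using t(3)[OF r(1)] sp by simp
  qed
  have Ceq: "measure M C = measure M {\<omega>\<in>space M. Y \<omega> > s}"
  proof (rule antisym)
    show "measure M C \<le> measure M {\<omega>\<in>space M. Y \<omega> > s}"
      by (rule prob_le_ae_subset[OF P Fs F1 _ CF]) measurable
    show "measure M {\<omega>\<in>space M. Y \<omega> > s} \<le> measure M C"
      using Ysub Cs by (intro finite_measure_mono) auto
  qed
  have Cpos: "0 < measure M C" using Ceq posY by simp
  define A where "A y = {\<omega>\<in>space M. Tbar T (\<tau> \<omega>) - ennreal (T t) > ennreal y}" for y
  have As: "A y \<inter> C \<in> sets M" for y unfolding A_def C_def by measurable
  have sub: "{\<omega>\<in>space M. Y \<omega> > s + y} \<subseteq> A y \<inter> C" if y0: "0 \<le> y" for y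
  proof
    fix \<omega> assume w: "\<omega> \<in> {\<omega>\<in>space M. Y \<omega> > s + y}"
    then have sp: "\<omega> \<in> space M" and gt: "Y \<omega> > s + y" by auto
    have inC: "\<omega> \<in> C" using Ysub[OF sp] gt y0 by simp
    have "Tbar T (\<tau> \<omega>) \<noteq> top"
    proof
      assume "Tbar T (\<tau> \<omega>) = top"
      then have "Y \<omega> = 0" unfolding Y_def by simp
      then show False using gt s0 y0 by simp
    qed
    then have eq: "Tbar T (\<tau> \<omega>) = ennreal (Y \<omega>)" unfolding Y_def by (simp add: top.not_eq_extremum)
    have "ennreal y < ennreal (Y \<omega> - T t)" using gt t(2) y0 by (subst ennreal_less_iff) auto
    then have "ennreal y < Tbar T (\<tau> \<omega>) - ennreal (T t)" using eq ennreal_minus[OF Tt0] by simp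
    then show "\<omega> \<in> A y \<inter> C" using inC sp unfolding A_def by simp
  qed
  have ratio: "measure M {\<omega>\<in>space M. Y \<omega> > s + y} / measure M {\<omega>\<in>space M. Y \<omega> > s} \<le> cond_prob M (A y) C"
    if y0: "0 \<le> y" for y
  proof -
    have "measure M {\<omega>\<in>space M. Y \<omega> > s + y} \<le> measure M (A y \<inter> C)"
      using sub[OF y0] As by (intro finite_measure_mono) auto
    then show ?thesis unfolding cond_prob_def Ceq using posY by (simp add: divide_right_mono)
  qed
  have "(\<integral>\<^sup>+ y\<in>{0..}. ennreal (wm (measure M {\<omega>\<in>space M. Y \<omega> > s + y} / measure M {\<omega>\<in>space M. Y \<omega> > s})) \<partial>lborel)
     \<le> (\<integral>\<^sup>+ y\<in>{0..}. ennreal (wm (cond_prob M (A y) C)) \<partial>lborel)"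
    using int_w_mono[OF wm, of "\<lambda>y. measure M {\<omega>\<in>space M. Y \<omega> > s + y} / measure M {\<omega>\<in>space M. Y \<omega> > s}"
        "\<lambda>y. cond_prob M (A y) C"] ratio cond_prob_bounds[OF P Cs]
    by auto
  then have "ennreal lam * (\<integral>\<^sup>+ y\<in>{0..}. ennreal (wm (measure M {\<omega>\<in>space M. Y \<omega> > s + y} / measure M {\<omega>\<in>space M. Y \<omega> > s})) \<partial>lborel)
     \<le> ennreal lam * (\<integral>\<^sup>+ y\<in>{0..}. ennreal (wm (cond_prob M (A y) C)) \<partial>lborel)"
    by (rule mult_left_mono) simp
  also have "\<dots> \<le> ennreal (\<theta> * wp (cond_prob M {\<omega>\<in>space M. \<tau> \<omega> < \<infinity>} C))"
    unfolding A_def C_def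
    by (rule dc[unfolded dir_compat_def, rule_format, of t]) (use Cpos C_def t in simp_all)
  also have "\<dots> \<le> ennreal \<theta>"
  proof -
    have "wp (cond_prob M {\<omega>\<in>space M. \<tau> \<omega> < \<infinity>} C) \<le> 1"
      using weighting_facts(4)[OF wp] cond_prob_bounds[OF P Cs] by auto
    then have "\<theta> * wp (cond_prob M {\<omega>\<in>space M. \<tau> \<omega> < \<infinity>} C) \<le> \<theta>" using th
      by (simp add: mult_left_le)
    then show ?thesis by (simp add: ennreal_leI)
  qed
  finally show ?thesis unfolding Y_def .
qed

lemma grid1:
  fixes h a s :: real assumes h: "0 < h"
  shows "s < h * of_int \<lceil>a / h\<rceil> \<longleftrightarrow> h * of_int \<lfloor>s / h\<rfloor> < a"
proof -
  have "s < h * of_int \<lceil>a / h\<rceil> \<longleftrightarrow> s / h < of_int \<lceil>a / h\<rceil>"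
    using h by (simp add: pos_divide_less_eq mult.commute)
  also have "\<dots> \<longleftrightarrow> \<lfloor>s / h\<rfloor> < \<lceil>a / h\<rceil>" by (simp add: floor_less_iff)
  also have "\<dots> \<longleftrightarrow> of_int \<lfloor>s / h\<rfloor> < a / h" by (simp add: less_ceiling_iff)
  also have "\<dots> \<longleftrightarrow> h * of_int \<lfloor>s / h\<rfloor> < a"
    using h by (simp add: pos_less_divide_eq mult.commute)
  finally show ?thesis .
qed

lemma grid2:
  fixes h a :: real assumes h: "0 < h"
  shows "a \<le> h * of_int \<lceil>a / h\<rceil>"
proof -
  have "a / h \<le> of_int \<lceil>a / h\<rceil>" by simp
  then have "a \<le> of_int \<lceil>a / h\<rceil> * h" by (simp only: pos_divide_le_eq[OF h])
  then show ?thesis by (simp add: mult.commute)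
qed

lemma grid3:
  fixes h x :: real assumes h: "0 < h"
  shows "x - h < h * of_int \<lfloor>x / h\<rfloor>" "h * of_int \<lfloor>x / h\<rfloor> \<le> x"
    "0 \<le> x \<Longrightarrow> 0 \<le> h * of_int \<lfloor>x / h\<rfloor>"
proof -
  have "x / h - 1 < of_int \<lfloor>x / h\<rfloor>" by linarith
  then have "h * (x / h - 1) < h * of_int \<lfloor>x / h\<rfloor>" using h by simp
  then show "x - h < h * of_int \<lfloor>x / h\<rfloor>" using h by (simp add: algebra_simps)
  have "of_int \<lfloor>x / h\<rfloor> \<le> x / h" by simp
  then have i: "h * of_int \<lfloor>x / h\<rfloor> \<le> h * (x / h)" by (rule mult_left_mono) (use h in auto)
  have e: "h * (x / h) = x" using h by simp
  show "h * of_int \<lfloor>x / h\<rfloor> \<le> x" using i e by linarith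
  show "0 \<le> x \<Longrightarrow> 0 \<le> h * of_int \<lfloor>x / h\<rfloor>" using h by simp
qed

lemma antimono_meas:
  fixes f :: "real \<Rightarrow> real"
  assumes "\<And>x y. x \<le> y \<Longrightarrow> f y \<le> f x"
  shows "f \<in> borel_measurable borel"
proof -
  have "mono (\<lambda>x. - f x)" using assms by (auto simp: mono_def)
  then have "(\<lambda>x. - f x) \<in> borel_measurable borel" by (rule borel_measurable_mono)
  then have "(\<lambda>x. - (- f x)) \<in> borel_measurable borel" by measurable
  then show ?thesis by simp
qed

lemma meas_gt_antimono:
  fixes Y :: "'a \<Rightarrow> real"
  assumes "prob_space M" "Y \<in> borel_measurable M" "x \<le> y"
  shows "measure M {\<omega>\<in>space M. Y \<omega> > y} \<le> measure M {\<omega>\<in>space M. Y \<omega> > x}"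
proof -
  interpret prob_space M by fact
  show ?thesis using assms by (intro finite_measure_mono) auto
qed

lemma C4a:
  fixes Y :: "'a \<Rightarrow> real"
  assumes P: "prob_space M" and Ym[measurable]: "Y \<in> borel_measurable M"
    and a: "0 < \<alpha>" and h: "0 < h"
  shows "ennreal \<alpha> * aux_value M Y \<le> aux_value M (\<lambda>\<omega>. h * real_of_int \<lceil>\<alpha> * Y \<omega> / h\<rceil>)"
proof -
  interpret prob_space M by fact
  define f where "f y = ennreal (measure M {\<omega>\<in>space M. Y \<omega> > y / \<alpha>}) * indicator {0..} y" for y
  have fm0: "(\<lambda>y. measure M {\<omega>\<in>space M. Y \<omega> > y / \<alpha>}) \<in> borel_measurable borel"
    by (rule antimono_meas) (use a in \<open>auto intro!: meas_gt_antimono[OF P Ym] divide_right_mono\<close>)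
  have fm[measurable]: "f \<in> borel_measurable borel" unfolding f_def using fm0 by measurable
  have "(\<integral>\<^sup>+ y. f y \<partial>lborel) = ennreal \<bar>\<alpha>\<bar> * (\<integral>\<^sup>+ x. f (0 + \<alpha> * x) \<partial>lborel)"
    by (rule nn_integral_real_affine[OF fm]) (use a in simp)
  also have "(\<integral>\<^sup>+ x. f (0 + \<alpha> * x) \<partial>lborel) = aux_value M Y"
    unfolding aux_value_def f_def using a
    by (intro nn_integral_cong) (auto split: split_indicator simp: zero_le_mult_iff)
  finally have eq: "(\<integral>\<^sup>+ y. f y \<partial>lborel) = ennreal \<alpha> * aux_value M Y" using a by simp
  have "(\<integral>\<^sup>+ y. f y \<partial>lborel) \<le> aux_value M (\<lambda>\<omega>. h * real_of_int \<lceil>\<alpha> * Y \<omega> / h\<rceil>)"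
    unfolding aux_value_def f_def
  proof (rule nn_integral_mono)
    fix y :: real
    have "measure M {\<omega>\<in>space M. Y \<omega> > y / \<alpha>} \<le> measure M {\<omega>\<in>space M. h * real_of_int \<lceil>\<alpha> * Y \<omega> / h\<rceil> > y}"
    proof (intro finite_measure_mono)
      show "{\<omega>\<in>space M. Y \<omega> > y / \<alpha>} \<subseteq> {\<omega>\<in>space M. h * real_of_int \<lceil>\<alpha> * Y \<omega> / h\<rceil> > y}"
      proof safe
        fix \<omega> assume "\<omega> \<in> space M" "y / \<alpha> < Y \<omega>"
        then have "y < \<alpha> * Y \<omega>" using a by (simp add: pos_divide_less_eq mult.commute)
        also have "\<dots> \<le> h * real_of_int \<lceil>\<alpha> * Y \<omega> / h\<rceil>" by (rule grid2[OF h])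
        finally show "y < h * real_of_int \<lceil>\<alpha> * Y \<omega> / h\<rceil>" .
      qed
      show "{\<omega>\<in>space M. h * real_of_int \<lceil>\<alpha> * Y \<omega> / h\<rceil> > y} \<in> sets M" by measurable
    qed
    then show "ennreal (measure M {\<omega>\<in>space M. Y \<omega> > y / \<alpha>}) * indicator {0..} y
      \<le> ennreal (measure M {\<omega>\<in>space M. h * real_of_int \<lceil>\<alpha> * Y \<omega> / h\<rceil> > y}) * indicator {0..} y"
      by (auto split: split_indicator intro: ennreal_leI)
  qed
  then show ?thesis using eq by simp
qed

lemma C4b:
  fixes Y :: "'a \<Rightarrow> real"
  assumes P: "prob_space M" and Ym[measurable]: "Y \<in> borel_measurable M"
    and Y0: "\<forall>\<omega>\<in>space M. 0 \<le> Y \<omega>" and a: "0 < \<alpha>" and h: "0 < h"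
  shows "in_calT M (\<lambda>\<omega>. h * real_of_int \<lceil>\<alpha> * Y \<omega> / h\<rceil>)"
proof -
  interpret prob_space M by fact
  define Z where "Z \<omega> = h * real_of_int \<lceil>\<alpha> * Y \<omega> / h\<rceil>" for \<omega>
  have Zm[measurable]: "Z \<in> borel_measurable M" unfolding Z_def by measurable
  have Zn: "\<exists>n::nat. Z \<omega> = h * real n" if "\<omega> \<in> space M" for \<omega>
  proof -
    have "0 \<le> \<alpha> * Y \<omega> / h" using Y0 that a h by simp
    then have "0 \<le> \<lceil>\<alpha> * Y \<omega> / h\<rceil>" by linarith
    then have e1: "real_of_int \<lceil>\<alpha> * Y \<omega> / h\<rceil> = real (nat \<lceil>\<alpha> * Y \<omega> / h\<rceil>)" by simp
    show ?thesis unfolding Z_def by (rule exI[of _ "nat \<lceil>\<alpha> * Y \<omega> / h\<rceil>"]) (simp only: e1)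
  qed
  have Z0: "\<forall>\<omega>\<in>space M. 0 \<le> Z \<omega>" using Zn h by force
  define Fz where "Fz t = measure M {\<omega>\<in>space M. Z \<omega> \<le> t}" for t
  have "abs_cont_fun (\<lambda>_. 0)" unfolding abs_cont_fun_def by (auto intro!: exI[of _ 1])
  moreover have "mono Fz" unfolding Fz_def mono_def by (auto intro!: finite_measure_mono)
  moreover have "jump_fun Fz"
  proof -
    define B where "B t n = (if h * real n \<le> t then {\<omega>\<in>space M. Z \<omega> = h * real n} else {})" for t n
    have Bs: "range (B t) \<subseteq> sets M" for t unfolding B_def by auto
    have Bd: "disjoint_family (B t)" for t
      unfolding disjoint_family_on_def B_def using h by auto
    have BU: "(\<Union>n. B t n) = {\<omega>\<in>space M. Z \<omega> \<le> t}" for t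
    proof safe
      fix \<omega> n assume "\<omega> \<in> B t n" then show "\<omega> \<in> space M" "Z \<omega> \<le> t" unfolding B_def by (auto split: if_splits)
    next
      fix \<omega> assume w: "\<omega> \<in> space M" "Z \<omega> \<le> t"
      then obtain n where "Z \<omega> = h * real n" using Zn by blast
      then show "\<omega> \<in> (\<Union>n. B t n)" using w unfolding B_def by (auto intro!: exI[of _ n])
    qed
    have sums: "(\<lambda>n. measure M (B t n)) sums Fz t" for t
      using finite_measure_UNION[OF Bs Bd, of t] BU[of t] unfolding Fz_def by simp
    have j1: "\<forall>n. 0 \<le> measure M {\<omega>\<in>space M. Z \<omega> = h * real n}" by simp
    have "(\<lambda>n. measure M {\<omega>\<in>space M. Z \<omega> = h * real n}) sums measure M (\<Union>n. {\<omega>\<in>space M. Z \<omega> = h * real n})"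
      by (rule finite_measure_UNION) (use h in \<open>auto simp: disjoint_family_on_def\<close>)
    then have j2: "summable (\<lambda>n. measure M {\<omega>\<in>space M. Z \<omega> = h * real n})" by (rule sums_summable)
    have j3: "Fz t = (\<Sum>n. measure M {\<omega>\<in>space M. Z \<omega> = h * real n} *
        (if t < h * real n then 0 else if t = h * real n then 1 else 1))" for t
    proof -
      have "(\<lambda>n. measure M {\<omega>\<in>space M. Z \<omega> = h * real n} *
          (if t < h * real n then 0 else if t = h * real n then 1 else 1)) = (\<lambda>n. measure M (B t n))"
        unfolding B_def by (auto intro!: ext)
      then show ?thesis using sums_unique[OF sums[of t]] by simp
    qed
    show ?thesis unfolding jump_fun_def
      apply (rule exI[of _ "\<lambda>n. h * real n"])
      apply (rule exI[of _ "\<lambda>n. measure M {\<omega>\<in>space M. Z \<omega> = h * real n}"])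
      apply (rule exI[of _ "\<lambda>_. 1"])
      using j1 j2 j3 by simp
  qed
  moreover have "\<forall>t. 0 \<le> Fz t" unfolding Fz_def by simp
  ultimately have "cdf_decomp Fz"
    unfolding cdf_decomp_def by (intro exI[of _ "\<lambda>_. 0"] exI[of _ Fz]) (auto simp: mono_def)
  then show ?thesis unfolding in_calT_def Z_def[symmetric] Fz_def using Z0 Zm by simp
qed

lemma C4c:
  fixes Y :: "'a \<Rightarrow> real"
  assumes P: "prob_space M" and th: "\<theta> > 0" and lam: "lam > 0" and wm: "weighting wm"
    and Ym[measurable]: "Y \<in> borel_measurable M" and Y0: "\<forall>\<omega>\<in>space M. 0 \<le> Y \<omega>"
    and feasY: "\<And>s. 0 \<le> s \<Longrightarrow> 0 < measure M {\<omega>\<in>space M. Y \<omega> > s} \<Longrightarrow>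
       ennreal lam * (\<integral>\<^sup>+ y\<in>{0..}. ennreal (wm (measure M {\<omega>\<in>space M. Y \<omega> > s + y}
            / measure M {\<omega>\<in>space M. Y \<omega> > s})) \<partial>lborel) \<le> ennreal \<theta>"
    and a: "0 < \<alpha>" "\<alpha> < 1" and hdef: "h = (1 - \<alpha>) * \<theta> / lam"
  shows "aux_feasible M \<theta> lam wm (\<lambda>\<omega>. h * real_of_int \<lceil>\<alpha> * Y \<omega> / h\<rceil>)"
proof -
  interpret prob_space M by fact
  have h: "0 < h" unfolding hdef using a th lam by simp
  define Z where "Z \<omega> = h * real_of_int \<lceil>\<alpha> * Y \<omega> / h\<rceil>" for \<omega>
  have Zm[measurable]: "Z \<in> borel_measurable M" unfolding Z_def by measurable
  have inT: "in_calT M Z" unfolding Z_def by (rule C4b[OF P Ym Y0 a(1) h])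
  define g where "g x = h * of_int \<lfloor>x / h\<rfloor>" for x
  have setZ: "{\<omega>\<in>space M. Z \<omega> > x} = {\<omega>\<in>space M. Y \<omega> > g x / \<alpha>}" for x
  proof -
    have "Z \<omega> > x \<longleftrightarrow> Y \<omega> > g x / \<alpha>" for \<omega>
    proof -
      have "Z \<omega> > x \<longleftrightarrow> g x < \<alpha> * Y \<omega>" unfolding Z_def g_def by (rule grid1[OF h])
      also have "\<dots> \<longleftrightarrow> g x / \<alpha> < Y \<omega>" using a by (simp add: pos_divide_less_eq mult.commute)
      finally show ?thesis .
    qed
    then show ?thesis by auto
  qed
  have "\<forall>s\<ge>0. measure M {\<omega>\<in>space M. Z \<omega> > s} > 0 \<longrightarrow>
        ennreal lam * (\<integral>\<^sup>+ y\<in>{0..}. ennreal (wm (cond_prob M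
             {\<omega>\<in>space M. Z \<omega> - s > y} {\<omega>\<in>space M. Z \<omega> > s})) \<partial>lborel) \<le> ennreal \<theta>"
  proof (intro allI impI)
    fix s :: real assume s0: "0 \<le> s" and posZ: "0 < measure M {\<omega>\<in>space M. Z \<omega> > s}"
    define \<sigma> where "\<sigma> = g s / \<alpha>"
    have \<sigma>0: "0 \<le> \<sigma>" unfolding \<sigma>_def g_def using grid3(3)[OF h s0] a by simp
    define P0 where "P0 = measure M {\<omega>\<in>space M. Y \<omega> > \<sigma>}"
    have P0pos: "0 < P0" using posZ unfolding P0_def \<sigma>_def setZ .
    have Zs: "{\<omega>\<in>space M. Z \<omega> > s} \<in> sets M" by measurable
    have cpZ: "cond_prob M {\<omega>\<in>space M. Z \<omega> - s > y} {\<omega>\<in>space M. Z \<omega> > s}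
        = measure M {\<omega>\<in>space M. Y \<omega> > g (s + y) / \<alpha>} / P0" if y0: "0 \<le> y" for y
    proof -
      have "{\<omega>\<in>space M. Z \<omega> - s > y} \<inter> {\<omega>\<in>space M. Z \<omega> > s} = {\<omega>\<in>space M. Z \<omega> > s + y}"
        using y0 by auto
      then show ?thesis unfolding cond_prob_def P0_def using setZ[of "s + y"] setZ[of s] \<sigma>_def by simp
    qed
    have bound: "measure M {\<omega>\<in>space M. Y \<omega> > g (s + y) / \<alpha>} \<le> measure M {\<omega>\<in>space M. Y \<omega> > \<sigma> + (y - h) / \<alpha>}"
      for y
    proof (rule meas_gt_antimono[OF P Ym])
      have "g s + (y - h) \<le> g (s + y)"
        using grid3(2)[OF h, of s] grid3(1)[OF h, of "s + y"] unfolding g_def by linarith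
      then have "(g s + (y - h)) / \<alpha> \<le> g (s + y) / \<alpha>" using a by (simp add: divide_right_mono)
      then show "\<sigma> + (y - h) / \<alpha> \<le> g (s + y) / \<alpha>" unfolding \<sigma>_def by (simp add: add_divide_distrib)
    qed
    define \<psi> where "\<psi> v = wm (measure M {\<omega>\<in>space M. Y \<omega> > \<sigma> + max 0 v} / P0)" for v
    have rb: "0 \<le> measure M {\<omega>\<in>space M. Y \<omega> > \<sigma> + max 0 v} / P0 \<and> measure M {\<omega>\<in>space M. Y \<omega> > \<sigma> + max 0 v} / P0 \<le> 1" for v
    proof -
      have "measure M {\<omega>\<in>space M. Y \<omega> > \<sigma> + max 0 v} \<le> P0" unfolding P0_def
        by (rule meas_gt_antimono[OF P Ym]) simp
      then show ?thesis using P0pos by simp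
    qed
    have \<psi>anti: "\<psi> v' \<le> \<psi> v" if "v \<le> v'" for v v'
    proof -
      have "measure M {\<omega>\<in>space M. Y \<omega> > \<sigma> + max 0 v'} \<le> measure M {\<omega>\<in>space M. Y \<omega> > \<sigma> + max 0 v}"
        by (rule meas_gt_antimono[OF P Ym]) (use that in simp)
      then have "measure M {\<omega>\<in>space M. Y \<omega> > \<sigma> + max 0 v'} / P0 \<le> measure M {\<omega>\<in>space M. Y \<omega> > \<sigma> + max 0 v} / P0"
        using P0pos by (simp add: divide_right_mono)
      then show ?thesis unfolding \<psi>_def using weighting_facts(5)[OF wm] rb[of v] rb[of v'] by blast
    qed
    have \<psi>m[measurable]: "\<psi> \<in> borel_measurable borel" by (rule antimono_meas) (rule \<psi>anti)
    have \<psi>0: "0 \<le> \<psi> v" for v unfolding \<psi>_def using weighting_facts(3)[OF wm] rb[of v] by blast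
    define I where "I = (\<integral>\<^sup>+ v. ennreal (\<psi> v) * indicator {0..} v \<partial>lborel)"
    have feas\<sigma>: "ennreal lam * I \<le> ennreal \<theta>"
    proof -
      have "I = (\<integral>\<^sup>+ v\<in>{0..}. ennreal (wm (measure M {\<omega>\<in>space M. Y \<omega> > \<sigma> + v} / measure M {\<omega>\<in>space M. Y \<omega> > \<sigma>})) \<partial>lborel)"
        unfolding I_def \<psi>_def P0_def by (intro nn_integral_cong) (auto split: split_indicator)
      then show ?thesis using feasY[OF \<sigma>0] P0pos unfolding P0_def by simp
    qed
    define G where "G y = ennreal (\<psi> ((y - h) / \<alpha>)) * indicator {0..} ((y - h) / \<alpha>)" for y
    have Gm[measurable]: "G \<in> borel_measurable borel" unfolding G_def by measurable
    have intG: "(\<integral>\<^sup>+ y. G y \<partial>lborel) = ennreal \<alpha> * I"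
    proof -
      have "(\<integral>\<^sup>+ y. G y \<partial>lborel) = ennreal \<bar>\<alpha>\<bar> * (\<integral>\<^sup>+ x. G (h + \<alpha> * x) \<partial>lborel)"
        by (rule nn_integral_real_affine[OF Gm]) (use a in simp)
      also have "(\<lambda>x. G (h + \<alpha> * x)) = (\<lambda>x. ennreal (\<psi> x) * indicator {0..} x)"
        unfolding G_def using a by (auto intro!: ext)
      finally show ?thesis unfolding I_def using a by simp
    qed
    have pw: "ennreal (wm (cond_prob M {\<omega>\<in>space M. Z \<omega> - s > y} {\<omega>\<in>space M. Z \<omega> > s})) * indicator {0..} y
        \<le> indicator {0..<h} y + G y" for y
    proof (cases "0 \<le> y")
      case False then show ?thesis by simp
    next
      case y0: True
      show ?thesis
      proof (cases "y < h")
        case True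
        have "wm (cond_prob M {\<omega>\<in>space M. Z \<omega> - s > y} {\<omega>\<in>space M. Z \<omega> > s}) \<le> 1"
          using weighting_facts(4)[OF wm] cond_prob_bounds[OF P Zs] by blast
        then have "ennreal (wm (cond_prob M {\<omega>\<in>space M. Z \<omega> - s > y} {\<omega>\<in>space M. Z \<omega> > s})) * indicator {0..} y \<le> 1"
          using y0 by (simp add: ennreal_leI)
        moreover have "(1::ennreal) \<le> indicator {0..<h} y + G y" using True y0 by simp
        ultimately show ?thesis by (rule order_trans)
      next
        case False
        then have yh: "0 \<le> (y - h) / \<alpha>" using a by simp
        have "cond_prob M {\<omega>\<in>space M. Z \<omega> - s > y} {\<omega>\<in>space M. Z \<omega> > s}
            \<le> measure M {\<omega>\<in>space M. Y \<omega> > \<sigma> + max 0 ((y - h) / \<alpha>)} / P0"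
          unfolding cpZ[OF y0] using bound[of y] yh P0pos by (simp add: divide_right_mono)
        moreover have "0 \<le> cond_prob M {\<omega>\<in>space M. Z \<omega> - s > y} {\<omega>\<in>space M. Z \<omega> > s}"
          using cond_prob_bounds[OF P Zs] by blast
        ultimately have "wm (cond_prob M {\<omega>\<in>space M. Z \<omega> - s > y} {\<omega>\<in>space M. Z \<omega> > s}) \<le> \<psi> ((y - h) / \<alpha>)"
          unfolding \<psi>_def using weighting_facts(5)[OF wm] rb[of "(y - h) / \<alpha>"] by blast
        then show ?thesis using y0 yh False unfolding G_def by (simp add: ennreal_leI)
      qed
    qed
    have "(\<integral>\<^sup>+ y\<in>{0..}. ennreal (wm (cond_prob M {\<omega>\<in>space M. Z \<omega> - s > y} {\<omega>\<in>space M. Z \<omega> > s})) \<partial>lborel)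
        \<le> (\<integral>\<^sup>+ y. indicator {0..<h} y + G y \<partial>lborel)"
      by (rule nn_integral_mono) (rule pw)
    also have "\<dots> = (\<integral>\<^sup>+ y. indicator {0..<h} y \<partial>lborel) + (\<integral>\<^sup>+ y. G y \<partial>lborel)"
      by (rule nn_integral_add) auto
    also have "\<dots> = ennreal h + ennreal \<alpha> * I" using h intG by simp
    finally have int_le: "(\<integral>\<^sup>+ y\<in>{0..}. ennreal (wm (cond_prob M {\<omega>\<in>space M. Z \<omega> - s > y} {\<omega>\<in>space M. Z \<omega> > s})) \<partial>lborel)
        \<le> ennreal h + ennreal \<alpha> * I" .
    have lh: "lam * h = (1 - \<alpha>) * \<theta>" unfolding hdef using lam by simp
    have e1: "ennreal (lam * h) = ennreal lam * ennreal h" using lam h by (simp add: ennreal_mult)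
    have "ennreal lam * (\<integral>\<^sup>+ y\<in>{0..}. ennreal (wm (cond_prob M {\<omega>\<in>space M. Z \<omega> - s > y} {\<omega>\<in>space M. Z \<omega> > s})) \<partial>lborel)
        \<le> ennreal lam * (ennreal h + ennreal \<alpha> * I)"
      using int_le by (rule mult_left_mono) simp
    also have "\<dots> = ennreal (lam * h) + ennreal \<alpha> * (ennreal lam * I)"
      using e1 by (simp add: distrib_left mult.left_commute)
    also have "\<dots> \<le> ennreal (lam * h) + ennreal \<alpha> * ennreal \<theta>"
      by (intro add_left_mono mult_left_mono feas\<sigma>) simp
    also have "\<dots> = ennreal (lam * h + \<alpha> * \<theta>)"
      using lam h a th by (simp add: ennreal_plus ennreal_mult)
    also have "lam * h + \<alpha> * \<theta> = \<theta>" using lh by (simp add: algebra_simps)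
    finally show "ennreal lam * (\<integral>\<^sup>+ y\<in>{0..}. ennreal (wm (cond_prob M
             {\<omega>\<in>space M. Z \<omega> - s > y} {\<omega>\<in>space M. Z \<omega> > s})) \<partial>lborel) \<le> ennreal \<theta>" .
  qed
  then show ?thesis using inT unfolding aux_feasible_def Z_def by blast
qed

theorem lemma4:
  fixes M :: "'a measure" and \<theta> lam :: real and wp wm :: "real \<Rightarrow> real"
    and \<tau> :: "'a \<Rightarrow> ereal" and T :: "real \<Rightarrow> real"
  assumes "prob_space M"
    and "\<theta> > 0" and "lam > 0"
    and "weighting wp" and "weighting wm"
    and "dpp M \<tau> T"
    and "measure M {\<omega>\<in>space M. \<tau> \<omega> < \<infinity>} = 1"
    and "aux_solves M \<theta> lam wm (\<lambda>\<omega>. enn2real (Tbar T (\<tau> \<omega>)))"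
  shows "optimal_dpp M \<theta> lam wp wm \<tau> T"
proof -
  note P = assms(1) and th = assms(2) and lam = assms(3) and wp = assms(4) and wm = assms(5)
    and d = assms(6) and fin = assms(7) and sol = assms(8)
  interpret prob_space M by fact
  have feasX: "aux_feasible M \<theta> lam wm (\<lambda>\<omega>. enn2real (Tbar T (\<tau> \<omega>)))"
    and optX: "\<And>Y. aux_feasible M \<theta> lam wm Y \<Longrightarrow> aux_value M Y \<le> aux_value M (\<lambda>\<omega>. enn2real (Tbar T (\<tau> \<omega>)))"
    using sol unfolding aux_solves_def by auto
  have A: "dir_compat M \<theta> lam wp wm \<tau> T" by (rule partA[OF P th lam wp wm d fin feasX])
  have B: "revenue M \<tau> T = aux_value M (\<lambda>\<omega>. enn2real (Tbar T (\<tau> \<omega>)))" by (rule partB[OF P d fin])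
  have opt: "revenue M \<tau>' T' \<le> revenue M \<tau> T" if d': "dpp M \<tau>' T'" and dc': "dir_compat M \<theta> lam wp wm \<tau>' T'"
    for \<tau>' T'
  proof -
    have cp: "cum_pay T'" and st: "stopping_time_rv M \<tau>'" using d' by (auto simp: dpp_def)
    have [measurable]: "\<tau>' \<in> borel_measurable M" and t0: "\<forall>\<omega>\<in>space M. 0 \<le> \<tau>' \<omega>"
      using st by (auto simp: stopping_time_rv_def)
    have [measurable]: "(\<lambda>\<omega>. Tbar T' (\<tau>' \<omega>)) \<in> borel_measurable M"
      by (rule Tbar_measurable[OF cp]) (use t0 in auto)
    define Y where "Y \<omega> = enn2real (Tbar T' (\<tau>' \<omega>))" for \<omega>
    have Ym[measurable]: "Y \<in> borel_measurable M" unfolding Y_def by measurable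
    have Y0: "\<forall>\<omega>\<in>space M. 0 \<le> Y \<omega>" unfolding Y_def by simp
    have N0: "measure M {\<omega>\<in>space M. Tbar T' (\<tau>' \<omega>) = top} = 0" by (rule C1[OF P lam wm d' dc'])
    have R: "revenue M \<tau>' T' = aux_value M Y" unfolding Y_def by (rule C2[OF P d' N0])
    have feasY: "ennreal lam * (\<integral>\<^sup>+ y\<in>{0..}. ennreal (wm (measure M {\<omega>\<in>space M. Y \<omega> > s + y}
            / measure M {\<omega>\<in>space M. Y \<omega> > s})) \<partial>lborel) \<le> ennreal \<theta>"
      if "0 \<le> s" "0 < measure M {\<omega>\<in>space M. Y \<omega> > s}" for s
      using C3[OF P th lam wp wm d' dc' N0 that[unfolded Y_def]] unfolding Y_def .
    define VX where "VX = aux_value M (\<lambda>\<omega>. enn2real (Tbar T (\<tau> \<omega>)))"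
    have "aux_value M Y \<le> VX"
    proof (rule ccontr)
      assume "\<not> aux_value M Y \<le> VX"
      then have lt: "VX < aux_value M Y" by simp
      obtain \<alpha> where a: "0 < \<alpha>" "\<alpha> < 1" and la: "VX < ennreal \<alpha> * aux_value M Y"
      proof (cases "aux_value M Y = top")
        case True
        have "VX < top" using lt True by simp
        then show ?thesis using that[of "1/2"] True by (simp add: ennreal_mult_top)
      next
        case False
        then obtain r where r: "0 \<le> r" "aux_value M Y = ennreal r" by (cases "aux_value M Y") auto
        have "VX < top" using lt r by (simp add: order.strict_trans)
        then obtain v where v: "0 \<le> v" "VX = ennreal v" by (cases VX) auto
        have vr: "v < r" using lt r v by (simp add: ennreal_less_iff)
        define \<alpha> where "\<alpha> = (v / r + 1) / 2"
        have rp: "0 < r" using vr v by simp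
        have "v / r < 1" using vr rp by simp
        then have a1: "\<alpha> < 1" unfolding \<alpha>_def by simp
        have "0 \<le> v / r" using v rp by simp
        then have a0: "0 < \<alpha>" unfolding \<alpha>_def by simp
        have "\<alpha> * r = (v + r) / 2" unfolding \<alpha>_def using rp by (simp add: field_simps)
        then have "v < \<alpha> * r" using vr by simp
        then have "ennreal v < ennreal (\<alpha> * r)" using v by (simp add: ennreal_less_iff)
        then have "VX < ennreal \<alpha> * aux_value M Y" using v r a0 by (simp add: ennreal_mult)
        then show ?thesis using that a0 a1 by blast
      qed
      define h where "h = (1 - \<alpha>) * \<theta> / lam"
      have h0: "0 < h" unfolding h_def using a th lam by simp
      have "aux_feasible M \<theta> lam wm (\<lambda>\<omega>. h * real_of_int \<lceil>\<alpha> * Y \<omega> / h\<rceil>)"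
        by (rule C4c[OF P th lam wm Ym Y0 feasY a h_def])
      then have "aux_value M (\<lambda>\<omega>. h * real_of_int \<lceil>\<alpha> * Y \<omega> / h\<rceil>) \<le> VX"
        unfolding VX_def by (rule optX)
      moreover have "ennreal \<alpha> * aux_value M Y \<le> aux_value M (\<lambda>\<omega>. h * real_of_int \<lceil>\<alpha> * Y \<omega> / h\<rceil>)"
        by (rule C4a[OF P Ym a(1) h0])
      ultimately show False using la by simp
    qed
    then show ?thesis using R B VX_def by simp
  qed
  show ?thesis unfolding optimal_dpp_def using d A opt by blast
qed

end
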